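(* Let $v$ be a floating-point value (zero or a normal IEEE 754 double) with $\alpha = DP(v) \le 22$ and $\beta = DS(v) \le 15$. For each integer $i \ge 0$ let $\varepsilon_i = |v \otimes 10^{i} - round(v \otimes 10^{i})|$ and $\mu_i = |v \otimes 10^{i}| \times 2^{-52}$ (these two quantities being evaluated exactly on the double $v \otimes 10^i$). Then $\varepsilon_i > \mu_i$ for every $i \in \{0, 1, \dots, \alpha - 1\}$, and $\varepsilon_\alpha \le \mu_\alpha$.
   Context: Convention: a floating-point value $v$ is identified with the decimal number given by its decimal format $DF(v)$, i.e. its shortest decimal representation that reads back to $v$. For a nonzero terminating decimal $x$, $DP(x)$ is the least nonnegative integer $j$ with $x \times 10^j$ an integer, and $DS(x) = DP(x) + \lfloor \log_{10}|x|\rfloor + 1$; $DP(0)=DS(0)=0$. $v \otimes 10^{i}$ denotes the product computed in IEEE 754 double-precision arithmetic (round-to-nearest), with $10^i$ represented as a double. $round(\cdot)$ denotes rounding to the nearest integer. *)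

theory Defs
  imports Complex_Main
begin

text \<open>Normal doubles: m * 2^e with 53-bit integer significand and exponent range
  of binary64 (unbiased exponent -1022..1023, i.e. e = E - 52 in -1074..971).\<close>
definition is_normal_double :: "real \<Rightarrow> bool" where
  "is_normal_double v \<longleftrightarrow>
     (\<exists>m e :: int. v = of_int m * 2 powr (of_int e) \<and> 2^52 \<le> \<bar>m\<bar> \<and> \<bar>m\<bar> < 2^53
                   \<and> -1074 \<le> e \<and> e \<le> 971)"

definition round_even :: "real \<Rightarrow> int" where
  "round_even y =
     (if y - of_int \<lfloor>y\<rfloor> < 1/2 then \<lfloor>y\<rfloor>
      else if y - of_int \<lfloor>y\<rfloor> > 1/2 then \<lfloor>y\<rfloor> + 1
      else if even \<lfloor>y\<rfloor> then \<lfloor>y\<rfloor> else \<lfloor>y\<rfloor> + 1)"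

text \<open>IEEE 754 binary64 round-to-nearest-even of a real (normals and subnormals;
  overflow to infinity is not modelled).\<close>
definition fl :: "real \<Rightarrow> real" where
  "fl x = (if x = 0 then 0 else
     (let E = max \<lfloor>log 2 \<bar>x\<bar>\<rfloor> (-1022); u = 2 powr (of_int E - 52)
      in u * of_int (round_even (x / u))))"

definition dmul_pow10 :: "real \<Rightarrow> nat \<Rightarrow> real" where
  "dmul_pow10 v i = fl (v * fl (10 ^ i))"

definition terminating_decimal :: "real \<Rightarrow> bool" where
  "terminating_decimal x \<longleftrightarrow> (\<exists>j::nat. x * 10 ^ j \<in> \<int>)"

definition DP :: "real \<Rightarrow> nat" where
  "DP x = (LEAST j::nat. x * 10 ^ j \<in> \<int>)"

definition DS :: "real \<Rightarrow> int" where
  "DS x = (if x = 0 then 0 else int (DP x) + \<lfloor>log 10 \<bar>x\<bar>\<rfloor> + 1)"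

definition readback :: "real \<Rightarrow> real set" where
  "readback v = {x. terminating_decimal x \<and> fl x = v}"

definition DF :: "real \<Rightarrow> real" where
  "DF v = (let n = (LEAST n::int. \<exists>x\<in>readback v. DS x = n \<and> n \<ge> 0);
               C = {x \<in> readback v. DS x = n}
           in SOME x. x \<in> C \<and> (\<forall>y\<in>C. \<bar>x - v\<bar> \<le> \<bar>y - v\<bar>))"

definition eps_i :: "real \<Rightarrow> nat \<Rightarrow> real" where
  "eps_i v i = \<bar>dmul_pow10 v i - of_int (round (dmul_pow10 v i))\<bar>"

definition mu_i :: "real \<Rightarrow> nat \<Rightarrow> real" where
  "mu_i v i = \<bar>dmul_pow10 v i\<bar> * 2 powr (-52)"

end

theory Submission
  imports Defs
begin

lemma round_even_err: "\<bar>y - of_int (round_even y)\<bar> \<le> 1/2"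
  unfolding round_even_def
  using floor_le_iff[of y] le_floor_iff[of _ y] of_int_floor_le[of y] real_of_int_floor_add_one_gt[of y]
  by (auto split: if_splits)

lemma round_even_int: "round_even (of_int n) = n"
  unfolding round_even_def by simp

lemma fl_gen:
  assumes "x \<noteq> 0"
  defines "E \<equiv> max \<lfloor>log 2 \<bar>x\<bar>\<rfloor> (-1022)"
  shows "fl x = 2 powr (of_int E - 52) * of_int (round_even (x / 2 powr (of_int E - 52)))"
    and "\<bar>fl x - x\<bar> \<le> 2 powr (of_int E - 53)"
proof -
  show e: "fl x = 2 powr (of_int E - 52) * of_int (round_even (x / 2 powr (of_int E - 52)))"
    using assms unfolding fl_def E_def Let_def by simp
  define u :: real where "u = 2 powr (of_int E - 52)"
  have u: "u > 0" unfolding u_def by simp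
  have "\<bar>fl x - x\<bar> = u * \<bar>x/u - of_int (round_even (x/u))\<bar>"
  proof -
    have "u * (x/u - of_int (round_even (x/u))) = x - u * of_int (round_even (x/u))"
      using u by (simp add: field_simps)
    then show ?thesis using e u unfolding u_def[symmetric]
      by (metis abs_minus_commute abs_mult abs_of_pos)
  qed
  also have "\<dots> \<le> u * (1/2)"
    using u round_even_err by (intro mult_left_mono) auto
  also have "u * (1/2) = 2 powr (of_int E - 53)"
    unfolding u_def by (simp add: powr_diff)
  finally show "\<bar>fl x - x\<bar> \<le> 2 powr (of_int E - 53)" .
qed

lemma fl_normal:
  assumes y: "\<bar>y\<bar> \<ge> 2 powr -1022"
  defines "E \<equiv> \<lfloor>log 2 \<bar>y\<bar>\<rfloor>"
  shows "E \<ge> -1022" "2 powr E \<le> \<bar>y\<bar>" "\<bar>y\<bar> < 2 powr (E+1)"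
    "\<exists>r::int. fl y = 2 powr (of_int E - 52) * of_int r"
    "\<bar>fl y - y\<bar> \<le> 2 powr (of_int E - 53)" "2 powr E \<le> \<bar>fl y\<bar>"
proof -
  have ypos: "\<bar>y\<bar> > 0" using y by (smt (verit) powr_gt_zero)
  have "-1022 \<le> log 2 \<bar>y\<bar>" using y ypos by (simp add: le_log_iff)
  then show E: "E \<ge> -1022" unfolding E_def by linarith
  have "2 powr E \<le> \<bar>y\<bar> \<and> \<bar>y\<bar> < 2 powr (E+1)"
    using floor_log_eq_powr_iff[of "\<bar>y\<bar>" 2 E] ypos unfolding E_def by simp
  then show yl: "2 powr E \<le> \<bar>y\<bar>" and "\<bar>y\<bar> < 2 powr (E+1)" by auto
  have y0: "y \<noteq> 0" using ypos by auto
  have mx: "max \<lfloor>log 2 \<bar>y\<bar>\<rfloor> (-1022) = E" using E unfolding E_def by simp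
  note g = fl_gen[OF y0, unfolded mx]
  define u :: real where "u = 2 powr (of_int E - 52)"
  have u: "u > 0" unfolding u_def by simp
  define r where "r = round_even (y / u)"
  have fy: "fl y = u * of_int r" using g(1) unfolding u_def r_def .
  then show "\<exists>r::int. fl y = 2 powr (of_int E - 52) * of_int r" unfolding u_def by blast
  show "\<bar>fl y - y\<bar> \<le> 2 powr (of_int E - 53)" using g(2) .
  have u52: "u * 2 powr 52 = 2 powr E" unfolding u_def powr_add[symmetric] by simp
  have "\<bar>y/u\<bar> \<ge> 2 powr 52"
    using yl u u52 by (simp add: abs_divide field_simps)
  moreover have "\<bar>y/u - of_int r\<bar> \<le> 1/2" unfolding r_def by (rule round_even_err)
  ultimately have "\<bar>of_int r\<bar> \<ge> (2::real) powr 52 - 1/2" by linarith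
  then have "\<bar>of_int r\<bar> > (2::real)^52 - 1" by (simp add: powr_realpow)
  then have "real_of_int (2^52 - 1) < real_of_int \<bar>r\<bar>" by simp
  then have "\<bar>r\<bar> > 2^52 - 1" by (simp only: of_int_less_iff)
  then have "\<bar>r\<bar> \<ge> 2^52" by linarith
  then have "real_of_int (2^52) \<le> real_of_int \<bar>r\<bar>" by (simp only: of_int_le_iff)
  then have "\<bar>of_int r\<bar> \<ge> (2::real)^52" by simp
  then have "u * \<bar>of_int r\<bar> \<ge> u * 2 powr 52" using u by (simp add: powr_realpow)
  moreover have "\<bar>fl y\<bar> = u * \<bar>of_int r\<bar>" using fy u by (simp add: abs_mult)
  ultimately show "2 powr E \<le> \<bar>fl y\<bar>" using u52 by linarith
qed

lemma fl_rel1: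
  assumes y: "\<bar>y\<bar> \<ge> 2 powr -1022"
  shows "\<bar>fl y - y\<bar> \<le> 2 powr -53 * \<bar>y\<bar>" "\<bar>fl y - y\<bar> \<le> 2 powr -53 * \<bar>fl y\<bar>"
proof -
  note n = fl_normal[OF y]
  define E where "E = \<lfloor>log 2 \<bar>y\<bar>\<rfloor>"
  have eq: "2 powr (of_int E - 53) = 2 powr -53 * 2 powr E" by (simp add: powr_add[symmetric])
  show "\<bar>fl y - y\<bar> \<le> 2 powr -53 * \<bar>y\<bar>"
    using n(5) n(2) eq unfolding E_def[symmetric] by (smt (verit) mult_left_mono powr_gt_zero)
  show "\<bar>fl y - y\<bar> \<le> 2 powr -53 * \<bar>fl y\<bar>"
    using n(5) n(6) eq unfolding E_def[symmetric] by (smt (verit) mult_left_mono powr_gt_zero)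
qed

lemma fl_rel2:
  assumes x: "x \<noteq> 0" and f: "\<bar>fl x\<bar> \<ge> 2 powr -1022"
  shows "\<bar>fl x - x\<bar> \<le> 2 powr -53 * \<bar>fl x\<bar>"
proof (cases "\<bar>x\<bar> \<ge> 2 powr -1022")
  case True
  then show ?thesis using fl_rel1 by blast
next
  case False
  have xpos: "\<bar>x\<bar> > 0" using x by simp
  have "log 2 \<bar>x\<bar> < -1022" using False xpos by (simp add: log_less_iff)
  then have "max \<lfloor>log 2 \<bar>x\<bar>\<rfloor> (-1022) = -1022" by linarith
  then have "\<bar>fl x - x\<bar> \<le> 2 powr (-1022 - 53)" using fl_gen(2)[OF x] by simp
  also have "\<dots> = 2 powr -53 * 2 powr -1022" by (simp add: powr_add[symmetric])
  also have "\<dots> \<le> 2 powr -53 * \<bar>fl x\<bar>" using f by (intro mult_left_mono) auto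
  finally show ?thesis .
qed

lemma fl_exact:
  assumes x: "x = of_int m * 2 powr of_int e" and m: "\<bar>m\<bar> < 2^53" and e: "e \<ge> -1074"
  shows "fl x = x"
proof (cases "m = 0")
  case True
  then show ?thesis using x by (simp add: fl_def)
next
  case False
  have x0: "x \<noteq> 0" using x False by simp
  define E where "E = max \<lfloor>log 2 \<bar>x\<bar>\<rfloor> (-1022)"
  have "E - 52 \<le> e"
  proof (cases "\<lfloor>log 2 \<bar>x\<bar>\<rfloor> \<le> -1022")
    case True
    then show ?thesis using e unfolding E_def by simp
  next
    case False
    have "real_of_int \<bar>m\<bar> < real_of_int (2^53)" using m by (simp only: of_int_less_iff)
    then have "\<bar>of_int m\<bar> < (2::real) powr 53" by simp
    then have "\<bar>x\<bar> < 2 powr 53 * 2 powr e" using x by (simp add: abs_mult)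
    also have "\<dots> = 2 powr (e + 53)" unfolding powr_add[symmetric] by (simp add: add.commute)
    finally have "log 2 \<bar>x\<bar> < e + 53" using x0 by (simp add: log_less_iff)
    then have "\<lfloor>log 2 \<bar>x\<bar>\<rfloor> \<le> e + 52" by linarith
    then show ?thesis using False unfolding E_def by simp
  qed
  then obtain n :: nat where n: "e - E + 52 = int n" by (metis add.commute diff_add_cancel diff_diff_eq2 diff_ge_0_iff_ge zero_le_imp_eq_int)
  have "x / 2 powr (of_int E - 52) = of_int m * 2 powr (of_int (e - E + 52))"
    using x by (simp add: powr_diff powr_add field_simps)
  also have "\<dots> = of_int (m * 2^n)" using n by (simp add: powr_realpow)
  finally have q: "x / 2 powr (of_int E - 52) = of_int (m * 2^n)" .
  have "fl x = 2 powr (of_int E - 52) * of_int (round_even (x / 2 powr (of_int E - 52)))"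
    using fl_gen(1)[OF x0] unfolding E_def .
  also have "\<dots> = x" unfolding q round_even_int using q by (simp add: field_simps)
  finally show ?thesis .
qed

lemma fl_zero[simp]: "fl 0 = 0" by (simp add: fl_def)

lemma fl_pow10: assumes "i \<le> 22" shows "fl (10 ^ i) = 10 ^ i"
proof -
  have "(5::int)^i \<le> 5^22" using assms by (intro power_increasing) auto
  then have a: "\<bar>(5::int)^i\<bar> < 2^53" by simp
  have "(10::real)^i = of_int (5^i) * 2 powr of_int (int i)"
    by (simp add: powr_realpow power_mult_distrib[symmetric])
  then show ?thesis using fl_exact[OF _ a, of _ "int i"] by simp
qed

lemma dmul_eq: "i \<le> 22 \<Longrightarrow> dmul_pow10 v i = fl (v * 10 ^ i)"
  by (simp add: dmul_pow10_def fl_pow10)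

lemma DP_prop:
  assumes "terminating_decimal x"
  shows "x * 10 ^ DP x \<in> \<int>" "\<And>i. i < DP x \<Longrightarrow> x * 10 ^ i \<notin> \<int>"
proof -
  obtain j where j: "x * 10 ^ j \<in> \<int>" using assms unfolding terminating_decimal_def by blast
  show "x * 10 ^ DP x \<in> \<int>" unfolding DP_def by (rule LeastI[of _ j]) (rule j)
  fix i assume "i < DP x" then show "x * 10 ^ i \<notin> \<int>" unfolding DP_def by (rule not_less_Least)
qed

lemma DS_pos:
  assumes "terminating_decimal x" "x \<noteq> 0"
  shows "DS x \<ge> 1"
proof -
  obtain k where k: "x * 10 ^ DP x = of_int k" using DP_prop(1)[OF assms(1)] by (auto elim: Ints_cases)
  have "k \<noteq> 0" using k assms(2) by auto
  then have "\<bar>of_int k\<bar> \<ge> (1::real)" by linarith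
  then have "\<bar>x\<bar> * 10 ^ DP x \<ge> 1" using k by (metis abs_mult abs_of_nonneg zero_le_power zero_le_numeral)
  then have "\<bar>x\<bar> \<ge> 1 / 10 ^ DP x" by (simp add: field_simps)
  also have "1 / 10 ^ DP x = (10::real) powr (- real (DP x))" by (simp add: powr_minus powr_realpow divide_inverse)
  finally have "log 10 \<bar>x\<bar> \<ge> - real (DP x)" using assms(2) by (simp add: le_log_iff)
  then have "\<lfloor>log 10 \<bar>x\<bar>\<rfloor> \<ge> - int (DP x)" by linarith
  then show ?thesis using assms(2) unfolding DS_def by simp
qed

lemma normal_props:
  assumes "is_normal_double v"
  shows "terminating_decimal v" "fl v = v" "\<bar>v\<bar> \<ge> 2 powr -1022" "v \<noteq> 0"
proof -
  obtain m e :: int where v: "v = of_int m * 2 powr (of_int e)" and m1: "2^52 \<le> \<bar>m\<bar>" and m2: "\<bar>m\<bar> < 2^53"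
    and e1: "-1074 \<le> e" and e2: "e \<le> 971"
    using assms unfolding is_normal_double_def by blast
  show "fl v = v" using fl_exact[OF v m2 e1] .
  have "real_of_int (2^52) \<le> real_of_int \<bar>m\<bar>" using m1 by (simp only: of_int_le_iff)
  then have mm: "\<bar>of_int m\<bar> \<ge> (2::real) powr 52" by (simp add: powr_realpow)
  have "(2::real) powr -1022 = 2 powr 52 * 2 powr -1074" by (subst powr_add[symmetric]) simp
  also have "\<dots> \<le> \<bar>of_int m\<bar> * 2 powr e" using mm e1 by (intro mult_mono) auto
  also have "\<dots> = \<bar>v\<bar>" using v by (simp add: abs_mult)
  finally show vb: "\<bar>v\<bar> \<ge> 2 powr -1022" .
  then show "v \<noteq> 0" by (smt (verit) powr_gt_zero)
  show "terminating_decimal v"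
  proof (cases "e \<ge> 0")
    case True
    then obtain n :: nat where n: "e = int n" using nonneg_eq_int by blast
    have p: "(2::real) powr (of_int e) = 2 ^ n" unfolding n by (simp add: powr_realpow)
    have "v * 10 ^ 0 = of_int (m * 2^n)" unfolding v p by simp
    then show ?thesis unfolding terminating_decimal_def by (metis Ints_of_int)
  next
    case False
    have "\<exists>n::nat. e = - int n" using False by presburger
    then obtain n :: nat where n: "e = - int n" by blast
    have p: "(2::real) powr (of_int e) * 2 ^ n = 1" unfolding n
      by (simp add: powr_minus powr_realpow)
    have t: "(10::real) ^ n = 2 ^ n * 5 ^ n" by (simp add: power_mult_distrib[symmetric])
    have "v * 10 ^ n = of_int m * (2 powr e * 2^n) * 5^n" unfolding v t by (simp only: mult_ac)
    also have "\<dots> = of_int (m * 5^n)" unfolding p by simp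
    finally show ?thesis unfolding terminating_decimal_def by (metis Ints_of_int)
  qed
qed

lemma int_least:
  fixes P :: "int \<Rightarrow> bool"
  assumes "P a" "a \<ge> 0"
  shows "P (LEAST n::int. P n \<and> n \<ge> 0)"
proof -
  define m where "m = (LEAST k::nat. P (int k))"
  have pa: "P (int (nat a))" using assms by simp
  have pm: "P (int m)" unfolding m_def by (rule LeastI[of _ "nat a"]) (rule pa)
  have "(LEAST n::int. P n \<and> n \<ge> 0) = int m"
  proof (rule Least_equality)
    show "P (int m) \<and> int m \<ge> 0" using pm by simp
    fix y assume "P y \<and> 0 \<le> y"
    then have "P (int (nat y))" by simp
    then have "m \<le> nat y" unfolding m_def by (rule Least_le)
    then show "int m \<le> y" using \<open>P y \<and> 0 \<le> y\<close> by linarith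
  qed
  then show ?thesis using pm by simp
qed

lemma DF_zero: "DF 0 = 0"
proof -
  have z: "0 \<in> readback 0" unfolding readback_def terminating_decimal_def by simp
  have n: "(LEAST n::int. \<exists>x\<in>readback 0. DS x = n \<and> n \<ge> 0) = 0"
    by (rule Least_equality) (use z in \<open>auto simp: DS_def\<close>)
  have C: "{x \<in> readback 0. DS x = 0} = {0}"
  proof -
    have "x = 0" if "x \<in> readback 0" "DS x = 0" for x
      using that DS_pos[of x] unfolding readback_def by force
    then show ?thesis using z by (auto simp: DS_def)
  qed
  show ?thesis unfolding DF_def Let_def n C
    by (rule someI2[of _ 0]) auto
qed

lemma DF_normal:
  assumes vn: "is_normal_double v"
  shows "fl (DF v) = v" "terminating_decimal (DF v)"
proof -
  note np = normal_props[OF vn]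
  define R where "R = readback v"
  have vR: "v \<in> R" unfolding R_def readback_def using np by simp
  have "DS v \<ge> 0" using DS_pos[OF np(1) np(4)] by simp
  define n where "n = (LEAST n::int. \<exists>x\<in>R. DS x = n \<and> n \<ge> 0)"
  have nn: "n = (LEAST n::int. (\<exists>x\<in>R. DS x = n) \<and> n \<ge> 0)" unfolding n_def
    by (rule arg_cong[where f=Least]) auto
  have "\<exists>x\<in>R. DS x = n" unfolding nn
    using int_least[of "\<lambda>n. \<exists>x\<in>R. DS x = n", of "DS v"] vR \<open>DS v \<ge> 0\<close> by blast
  define C where "C = {x \<in> R. DS x = n}"
  have Cne: "C \<noteq> {}" unfolding C_def using \<open>\<exists>x\<in>R. DS x = n\<close> by blast
  have vpos: "\<bar>v\<bar> > 0" using np(4) by simp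
  define L where "L = \<lfloor>log 10 (\<bar>v\<bar>/2)\<rfloor>"
  define N where "N = nat (n - 1 - L)"
  define M where "M = \<lceil>2 * \<bar>v\<bar> * 10^N\<rceil>"
  have "C \<subseteq> (\<lambda>j. of_int j / 10^N) ` {-M..M}"
  proof
    fix x assume "x \<in> C"
    then have xt: "terminating_decimal x" and fx: "fl x = v" and dx: "DS x = n"
      unfolding C_def R_def readback_def by auto
    have x0: "x \<noteq> 0" using fx np(4) by auto
    have "\<bar>fl x - x\<bar> \<le> 2 powr -53 * \<bar>fl x\<bar>" using fl_rel2[OF x0] fx np(3) by simp
    then have e: "\<bar>v - x\<bar> \<le> 2 powr -53 * \<bar>v\<bar>" using fx by simp
    have "2 powr -53 \<le> (1/2::real)" by (simp add: powr_minus)  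
    then have "2 powr -53 * \<bar>v\<bar> \<le> 1/2 * \<bar>v\<bar>" by (intro mult_right_mono) auto
    then have xb1: "\<bar>x\<bar> \<ge> \<bar>v\<bar>/2" and xb2: "\<bar>x\<bar> \<le> 2 * \<bar>v\<bar>" using e by linarith+
    have "log 10 (\<bar>v\<bar>/2) \<le> log 10 \<bar>x\<bar>" using xb1 vpos by simp
    then have "L \<le> \<lfloor>log 10 \<bar>x\<bar>\<rfloor>" unfolding L_def by (rule floor_mono)
    then have dp: "DP x \<le> N" using dx x0 unfolding DS_def N_def by simp
    obtain k where k: "x * 10 ^ DP x = of_int k" using DP_prop(1)[OF xt] by (auto elim: Ints_cases)
    define j where "j = k * 10 ^ (N - DP x)"
    have xj: "x * 10 ^ N = of_int j"
    proof -
      have "(10::real) ^ N = 10 ^ DP x * 10 ^ (N - DP x)" using dp by (simp add: power_add[symmetric])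
      then show ?thesis unfolding j_def using k by simp
    qed
    have "\<bar>of_int j\<bar> \<le> 2 * \<bar>v\<bar> * 10^N" unfolding xj[symmetric] using xb2
      by (simp add: abs_mult)
    then have "\<bar>j\<bar> \<le> M" unfolding M_def by linarith
    moreover have "x = of_int j / 10^N" using xj by (simp add: field_simps)
    moreover have "j \<in> {-M..M}" using \<open>\<bar>j\<bar> \<le> M\<close> by auto
    ultimately show "x \<in> (\<lambda>j. of_int j / 10^N) ` {-M..M}" by (intro image_eqI) auto
  qed
  then have Cf: "finite C" by (rule finite_subset) auto
  have "\<exists>x. x \<in> C \<and> (\<forall>y\<in>C. \<bar>x - v\<bar> \<le> \<bar>y - v\<bar>)"
    using arg_min_if_finite(1)[OF Cf Cne, of "\<lambda>x. \<bar>x - v\<bar>"] arg_min_least[OF Cf Cne, of _ "\<lambda>x. \<bar>x - v\<bar>"]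
    by blast
  then have "DF v \<in> C" unfolding DF_def Let_def C_def[symmetric] n_def[symmetric] R_def[symmetric]
    by (rule someI2_ex) blast
  then show "fl (DF v) = v" "terminating_decimal (DF v)" unfolding C_def R_def readback_def by auto
qed

lemma c_val: "(2::real) powr -53 = 1 / 9007199254740992"
  by (simp add: powr_neg_numeral)
lemma c2_val: "(2::real) powr -52 = 1 / 4503599627370496"
  by (simp add: powr_neg_numeral)

lemma step_common:
  assumes vn: "is_normal_double v" and fd: "fl d = v" and i: "i \<le> 22"
  shows "\<bar>v * 10^i\<bar> \<ge> 2 powr -1022"
    "\<bar>v * 10^i - d * 10^i\<bar> \<le> 2 powr -53 * \<bar>v * 10^i\<bar>"
    "dmul_pow10 v i = fl (v * 10^i)"
proof -
  note np = normal_props[OF vn]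
  have "(1::real) \<le> 10^i" by simp
  then have "\<bar>v\<bar> * 1 \<le> \<bar>v\<bar> * 10^i" by (intro mult_left_mono) auto
  then show "\<bar>v * 10^i\<bar> \<ge> 2 powr -1022" using np(3) by (simp add: abs_mult)
  have d0: "d \<noteq> 0" using fd np(4) by auto
  have "\<bar>v - d\<bar> \<le> 2 powr -53 * \<bar>v\<bar>" using fl_rel2[OF d0] fd np(3) by simp
  then have "\<bar>v - d\<bar> * 10^i \<le> 2 powr -53 * \<bar>v\<bar> * 10^i" by (intro mult_right_mono) auto
  then show "\<bar>v * 10^i - d * 10^i\<bar> \<le> 2 powr -53 * \<bar>v * 10^i\<bar>"
    by (simp add: abs_mult left_diff_distrib[symmetric])
  show "dmul_pow10 v i = fl (v * 10^i)" using dmul_eq[OF i] .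
qed

lemma main_normal:
  assumes vn: "is_normal_double v" and fd: "fl d = v" and td: "terminating_decimal d"
    and a22: "DP d \<le> 22" and ds: "DS d \<le> 15"
  shows "(\<forall>i < DP d. eps_i v i > mu_i v i) \<and> eps_i v (DP d) \<le> mu_i v (DP d)"
proof -
  note np = normal_props[OF vn]
  define a where "a = DP d"
  have d0: "d \<noteq> 0" using fd np(4) by auto
  obtain k where k: "d * 10 ^ a = of_int k" using DP_prop(1)[OF td] unfolding a_def by (auto elim: Ints_cases)
  have dpos: "\<bar>d\<bar> > 0" using d0 by simp
  have "\<lfloor>log 10 \<bar>d\<bar>\<rfloor> \<le> 14 - int a" using ds d0 unfolding DS_def a_def by simp
  then have "log 10 \<bar>d\<bar> < 15 - real a" by linarith
  then have "\<bar>d\<bar> < 10 powr (15 - real a)" using dpos by (simp add: log_less_iff)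
  then have "\<bar>d\<bar> * 10 powr real a < 10 powr (15 - real a) * 10 powr real a" by (intro mult_strict_right_mono) auto
  also have "\<dots> = 10 powr 15" by (simp add: powr_add[symmetric])
  finally have "\<bar>d\<bar> * 10^a < (10::real)^15" by (simp add: powr_realpow)
  moreover have "\<bar>of_int k\<bar> = \<bar>d\<bar> * (10::real)^a" unfolding k[symmetric] by (simp add: abs_mult)
  ultimately have kb: "\<bar>of_int k\<bar> < (10::real)^15" by simp
  have c: "(2::real) powr -53 = 1 / 9007199254740992" by (simp add: powr_neg_numeral)
  have c2: "(2::real) powr -52 = 1 / 4503599627370496" by (simp add: powr_neg_numeral)
  have part1: "eps_i v i > mu_i v i" if ia: "i < a" for i
  proof -
    have i22: "i \<le> 22" using ia a22 unfolding a_def by simp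
    note sc = step_common[OF vn fd i22]
    define y where "y = v * 10^i"
    define x where "x = fl y"
    define q where "q = d * 10^i"
    define W :: real where "W = 10 ^ (a - i)"
    have W: "W \<ge> 1" unfolding W_def by simp
    have qW: "q * W = of_int k" unfolding q_def W_def k[symmetric] using ia
      by (simp add: mult.assoc power_add[symmetric])
    have qni: "q \<notin> \<int>" unfolding q_def using DP_prop(2)[OF td] ia unfolding a_def by blast
    have eq: "eps_i v i = \<bar>x - of_int (round x)\<bar>" "mu_i v i = \<bar>x\<bar> * 2 powr -52"
      unfolding eps_i_def mu_i_def sc(3) x_def y_def by simp_all
    have yq: "\<bar>y - q\<bar> \<le> 2 powr -53 * \<bar>y\<bar>" using sc(2) unfolding y_def q_def .
    have xy: "\<bar>x - y\<bar> \<le> 2 powr -53 * \<bar>y\<bar>" using fl_rel1(1)[OF sc(1)] unfolding x_def y_def .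
    have dist: "\<bar>q - of_int z\<bar> * W \<ge> 1" for z
    proof -
      have "\<bar>q - of_int z\<bar> * W = \<bar>(q - of_int z) * W\<bar>" using W by (simp add: abs_mult)
      also have "(q - of_int z) * W = of_int (k - z * 10^(a-i))"
        using qW unfolding W_def by (simp add: left_diff_distrib)
      finally have "\<bar>q - of_int z\<bar> * W = \<bar>of_int (k - z * 10^(a-i))\<bar>" .
      moreover have "k - z * 10^(a-i) \<noteq> 0"
      proof
        assume "k - z * 10^(a-i) = 0"
        then have "q * W = of_int z * W" using qW unfolding W_def by simp
        then have "q = of_int z" using W by simp
        then show False using qni by simp
      qed
      ultimately show ?thesis by linarith
    qed
    define Y where "Y = \<bar>y\<bar> * W"
    define X where "X = \<bar>x\<bar> * W"
    define D where "D = \<bar>x - of_int (round x)\<bar> * W"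
    have "\<bar>q - of_int (round x)\<bar> \<le> \<bar>x - of_int (round x)\<bar> + \<bar>x - y\<bar> + \<bar>y - q\<bar>" by linarith
    then have "\<bar>q - of_int (round x)\<bar> * W \<le> (\<bar>x - of_int (round x)\<bar> + \<bar>x - y\<bar> + \<bar>y - q\<bar>) * W"
      using W by (intro mult_right_mono) auto
    also have "\<dots> = D + \<bar>x - y\<bar> * W + \<bar>y - q\<bar> * W" unfolding D_def by (simp add: distrib_right)
    finally have "\<bar>q - of_int (round x)\<bar> * W \<le> D + \<bar>x - y\<bar> * W + \<bar>y - q\<bar> * W" .
    moreover have "\<bar>x - y\<bar> * W \<le> 2 powr -53 * Y" unfolding Y_def using xy W
      by (metis mult.assoc mult_right_mono order_trans_rules(23) zero_le_one)
    moreover have "\<bar>y - q\<bar> * W \<le> 2 powr -53 * Y" unfolding Y_def using yq W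
      by (metis mult.assoc mult_right_mono order_trans_rules(23) zero_le_one)
    ultimately have h1: "1 \<le> D + 2 powr -53 * Y + 2 powr -53 * Y"
      using dist[of "round x"] by linarith
    have "\<bar>y\<bar> \<le> \<bar>q\<bar> + 2 powr -53 * \<bar>y\<bar>" using yq by linarith
    then have "\<bar>y\<bar> * W \<le> (\<bar>q\<bar> + 2 powr -53 * \<bar>y\<bar>) * W" using W by (intro mult_right_mono) auto
    then have h2: "Y \<le> \<bar>of_int k\<bar> + 2 powr -53 * Y" unfolding Y_def using qW W
      by (simp add: distrib_right abs_mult mult.assoc)
    have "\<bar>x\<bar> \<le> \<bar>y\<bar> + 2 powr -53 * \<bar>y\<bar>" using xy by linarith
    then have "\<bar>x\<bar> * W \<le> (\<bar>y\<bar> + 2 powr -53 * \<bar>y\<bar>) * W" using W by (intro mult_right_mono) auto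
    then have h3: "X \<le> Y + 2 powr -53 * Y" unfolding X_def Y_def by (simp add: distrib_right mult.assoc)
    have "D > X * 2 powr -52" using h1 h2 h3 kb unfolding c c2 by simp
    then have "\<bar>x - of_int (round x)\<bar> * W > (\<bar>x\<bar> * 2 powr -52) * W" unfolding D_def X_def
      by (simp add: mult_ac)
    then have "\<bar>x - of_int (round x)\<bar> > \<bar>x\<bar> * 2 powr -52" using W by simp
    then show ?thesis unfolding eq .
  qed
  have part2: "eps_i v a \<le> mu_i v a"
  proof -
    note sc = step_common[OF vn fd a22[folded a_def]]
    define y where "y = v * 10^a"
    define x where "x = fl y"
    have eq: "eps_i v a = \<bar>x - of_int (round x)\<bar>" "mu_i v a = \<bar>x\<bar> * 2 powr -52"
      unfolding eps_i_def mu_i_def sc(3) x_def y_def by simp_all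
    have yk: "\<bar>y - of_int k\<bar> \<le> 2 powr -53 * \<bar>y\<bar>" using sc(2) unfolding y_def k .
    have yb: "\<bar>y\<bar> \<ge> 2 powr -1022" using sc(1) unfolding y_def .
    note fn = fl_normal[OF yb]
    define E where "E = \<lfloor>log 2 \<bar>y\<bar>\<rfloor>"
    define u :: real where "u = 2 powr (of_int E - 52)"
    have u: "u > 0" unfolding u_def by simp
    obtain r :: int where r: "x = u * of_int r" using fn(4) unfolding x_def u_def E_def by blast
    have xy: "\<bar>x - y\<bar> \<le> u / 2" using fn(5) unfolding x_def u_def E_def[symmetric]
      by (simp add: powr_diff)
    have yE: "2 powr E \<le> \<bar>y\<bar>" "\<bar>y\<bar> < 2 powr (E+1)" using fn(2,3) unfolding E_def by auto
    have xE: "2 powr E \<le> \<bar>x\<bar>" using fn(6) unfolding x_def E_def .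
    have uE: "2 powr E = u * 2^52" unfolding u_def by (simp add: powr_diff)
    have uE1: "2 powr (E+1) = u * 2^53" unfolding u_def by (simp add: powr_diff powr_add)
    have "\<bar>y\<bar> \<le> \<bar>of_int k\<bar> + 2 powr -53 * \<bar>y\<bar>" using yk by linarith
    then have "\<bar>y\<bar> < 2 powr 53" using kb unfolding c by simp
    then have "E < 53"
    proof -
      assume h: "\<bar>y\<bar> < 2 powr 53"
      show "E < 53"
      proof (rule ccontr)
        assume "\<not> E < 53"
        then have "(53::real) \<le> real_of_int E" by simp
        then have "(2::real) powr 53 \<le> 2 powr E" by (rule powr_mono) simp
        then show False using h yE by linarith
      qed
    qed
    then have "\<exists>n::nat. 52 - E = int n" by presburger
    then obtain n :: nat where n: "52 - E = int n" by blast
    have "u * 2 ^ n = 1" unfolding u_def using n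
      by (simp add: powr_realpow[symmetric] powr_add[symmetric])
    then have ku: "of_int k = u * of_int (k * 2^n)" by (simp add: mult.assoc[symmetric] mult.commute)
    define t where "t = r - k * 2^n"
    have xk: "x - of_int k = u * of_int t" unfolding t_def r ku by (simp add: algebra_simps)
    have "\<bar>x - of_int k\<bar> \<le> u/2 + 2 powr -53 * \<bar>y\<bar>" using xy yk by linarith
    moreover have "2 powr -53 * \<bar>y\<bar> < 2 powr -53 * (u * 2^53)" using yE(2) uE1 by simp
    ultimately have "\<bar>x - of_int k\<bar> < u/2 + u" unfolding c by simp
    then have "u * \<bar>of_int t\<bar> < u * (3/2)" unfolding xk using u by (simp add: abs_mult)
    then have "\<bar>of_int t\<bar> < (3/2::real)" using u by simp
    then have "\<bar>t\<bar> \<le> 1" by linarith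
    then have "\<bar>of_int t\<bar> \<le> (1::real)" by linarith
    then have "\<bar>x - of_int k\<bar> \<le> u" unfolding xk using u by (simp add: abs_mult)
    moreover have "\<bar>x - of_int (round x)\<bar> \<le> \<bar>x - of_int k\<bar>" by (rule round_diff_minimal)
    moreover have "u \<le> \<bar>x\<bar> * 2 powr -52" using xE uE unfolding c2 by simp
    ultimately show ?thesis unfolding eq by linarith
  qed
  show ?thesis using part1 part2 unfolding a_def by blast
qed

theorem theorem4:
  fixes v :: real
  assumes "v = 0 \<or> is_normal_double v"
    and "DP (DF v) \<le> 22"
    and "DS (DF v) \<le> 15"
  shows "(\<forall>i < DP (DF v). eps_i v i > mu_i v i) \<and> eps_i v (DP (DF v)) \<le> mu_i v (DP (DF v))"
proof (cases "v = 0")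
  case True
  have "DP 0 = 0" unfolding DP_def by (rule Least_equality) auto
  then show ?thesis using True DF_zero by (simp add: eps_i_def mu_i_def dmul_pow10_def)
next
  case False
  then have vn: "is_normal_double v" using assms(1) by blast
  show ?thesis using main_normal[OF vn DF_normal[OF vn] assms(2,3)] .
qed

end
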